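(* For every positive integer $n$, the number $v(n)$ is odd.
   Context: Let $A$ be a finite set of $n$ candidates. A voter is a linear order (ranking) of $A$, written as a permutation $x_1x_2\cdots x_n$ of $A$, meaning the voter prefers $x_i$ to $x_j$ iff $i<j$. A set of voters is a nonempty finite multiset of voters (several voters may have the same ranking). A strong preference pattern on $A$ is a tournament $T$ on vertex set $A$ (for each pair of distinct $a,b\in A$ exactly one of the arcs $(a,b)$, $(b,a)$ is present). A set of voters $U$ generates $T$ if for every pair of distinct candidates $a,b$, the arc $(a,b)$ is in $T$ if and only if strictly more voters of $U$ rank $a$ above $b$ than rank $b$ above $a$ (so in particular no pair is tied). For a tournament $T$, $v(T)$ denotes the minimum size of a set of voters generating $T$, and $v(n)=\max\{v(T): T \text{ a tournament on } n \text{ vertices}\}$. *)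

theory Defs
  imports Main "HOL-Library.Multiset"
begin

text \<open>Candidates are {0..<n}. A voter is a ranking: a list listing every candidate exactly once,
  earlier positions being preferred.\<close>

definition is_voter :: "nat \<Rightarrow> nat list \<Rightarrow> bool" where
  "is_voter n xs \<longleftrightarrow> distinct xs \<and> set xs = {0..<n}"

definition prefers :: "nat list \<Rightarrow> nat \<Rightarrow> nat \<Rightarrow> bool" where
  "prefers xs a b \<longleftrightarrow> (\<exists>i j. i < j \<and> j < length xs \<and> xs ! i = a \<and> xs ! j = b)"

definition is_tournament :: "nat \<Rightarrow> (nat \<Rightarrow> nat \<Rightarrow> bool) \<Rightarrow> bool" where
  "is_tournament n T \<longleftrightarrow>
     (\<forall>a b. T a b \<longrightarrow> a < n \<and> b < n \<and> a \<noteq> b) \<and>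
     (\<forall>a<n. \<forall>b<n. a \<noteq> b \<longrightarrow> (T a b \<longleftrightarrow> \<not> T b a))"

definition is_voter_set :: "nat \<Rightarrow> nat list multiset \<Rightarrow> bool" where
  "is_voter_set n U \<longleftrightarrow> U \<noteq> {#} \<and> (\<forall>xs\<in>#U. is_voter n xs)"

definition generates :: "nat \<Rightarrow> nat list multiset \<Rightarrow> (nat \<Rightarrow> nat \<Rightarrow> bool) \<Rightarrow> bool" where
  "generates n U T \<longleftrightarrow> is_voter_set n U \<and>
     (\<forall>a<n. \<forall>b<n. a \<noteq> b \<longrightarrow>
        (T a b \<longleftrightarrow> size (filter_mset (\<lambda>xs. prefers xs b a) U)
                       < size (filter_mset (\<lambda>xs. prefers xs a b) U)))"

definition v_T :: "nat \<Rightarrow> (nat \<Rightarrow> nat \<Rightarrow> bool) \<Rightarrow> nat" where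
  "v_T n T = (LEAST k. \<exists>U. generates n U T \<and> size U = k)"

definition v :: "nat \<Rightarrow> nat" where
  "v n = Max {v_T n T | T. is_tournament n T}"

end

theory Submission
  imports Defs
begin

lemma prefers_Nil[simp]: "\<not> prefers [] a b" by (simp add: prefers_def)

lemma prefers_Cons[simp]: "prefers (x#xs) a b \<longleftrightarrow> (x = a \<and> b \<in> set xs) \<or> prefers xs a b"
proof
  assume "prefers (x#xs) a b"
  then obtain i j where h: "i < j" "j < length (x#xs)" "(x#xs)!i = a" "(x#xs)!j = b"
    unfolding prefers_def by blast
  show "(x = a \<and> b \<in> set xs) \<or> prefers xs a b"
  proof (cases i)
    case 0
    then obtain j' where "j = Suc j'" using h by (cases j) auto
    then show ?thesis using h 0 by (auto simp: in_set_conv_nth)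
  next
    case (Suc i')
    then obtain j' where "j = Suc j'" using h by (cases j) auto
    then show ?thesis using h Suc unfolding prefers_def by auto
  qed
next
  assume "(x = a \<and> b \<in> set xs) \<or> prefers xs a b"
  then show "prefers (x#xs) a b"
  proof
    assume "x = a \<and> b \<in> set xs"
    then obtain k where "k < length xs" "xs!k = b" "x = a" by (auto simp: in_set_conv_nth)
    then show ?thesis unfolding prefers_def by (intro exI[of _ 0] exI[of _ "Suc k"]) auto
  next
    assume "prefers xs a b"
    then obtain i j where "i < j" "j < length xs" "xs!i = a" "xs!j = b" unfolding prefers_def by blast
    then show ?thesis unfolding prefers_def by (intro exI[of _ "Suc i"] exI[of _ "Suc j"]) auto
  qed
qed

lemma prefers_set: "prefers xs a b \<Longrightarrow> a \<in> set xs \<and> b \<in> set xs"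
  by (induction xs) auto

lemma prefers_append: "prefers (xs @ ys) a b \<longleftrightarrow> prefers xs a b \<or> prefers ys a b \<or> (a \<in> set xs \<and> b \<in> set ys)"
  by (induction xs) auto

lemma prefers_rev: "prefers (rev xs) a b \<longleftrightarrow> prefers xs b a"
  by (induction xs) (auto simp: prefers_append dest: prefers_set)

lemma prefers_total: "distinct xs \<Longrightarrow> a \<in> set xs \<Longrightarrow> b \<in> set xs \<Longrightarrow> a \<noteq> b \<Longrightarrow> prefers xs a b \<or> prefers xs b a"
  by (induction xs) auto

lemma prefers_asym: "distinct xs \<Longrightarrow> prefers xs a b \<Longrightarrow> \<not> prefers xs b a"
  by (induction xs) (auto dest: prefers_set)

definition cnt :: "nat list multiset \<Rightarrow> nat \<Rightarrow> nat \<Rightarrow> nat" where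
  "cnt U a b = size (filter_mset (\<lambda>xs. prefers xs a b) U)"

lemma cnt_sum: "finite A \<Longrightarrow> cnt (sum f A) a b = (\<Sum>p\<in>A. cnt (f p) a b)"
  by (induction A rule: finite_induct) (auto simp: cnt_def)

lemma in_sum_mset: "finite A \<Longrightarrow> xs \<in># sum f A \<Longrightarrow> \<exists>p\<in>A. xs \<in># f p"
  by (induction A rule: finite_induct) auto

lemma cnt_total:
  assumes "is_voter_set n U" "a < n" "b < n" "a \<noteq> b"
  shows "cnt U a b + cnt U b a = size U"
proof -
  have "\<forall>xs\<in>#U. is_voter n xs" using assms(1) by (simp add: is_voter_set_def)
  then show ?thesis
  proof (induction U)
    case empty then show ?case by (simp add: cnt_def)
  next
    case (add x U)
    have "distinct x" "set x = {0..<n}" using add.prems by (auto simp: is_voter_def)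
    then have "prefers x a b \<noteq> prefers x b a" using prefers_total[of x a b] prefers_asym[of x a b] assms
      by auto
    then show ?case using add by (auto simp: cnt_def)
  qed
qed


definition pv :: "nat \<Rightarrow> nat \<Rightarrow> nat \<Rightarrow> nat list multiset" where
  "pv n a b = (let R = filter (\<lambda>c. c \<noteq> a \<and> c \<noteq> b) [0..<n] in {# a#b#R, rev R @ [a,b] #})"

lemma pv_voters: "a < n \<Longrightarrow> b < n \<Longrightarrow> a \<noteq> b \<Longrightarrow> xs \<in># pv n a b \<Longrightarrow> is_voter n xs"
  unfolding pv_def is_voter_def Let_def by auto

lemma pv_cnt:
  assumes "a < n" "b < n" "a \<noteq> b" "x < n" "y < n" "x \<noteq> y"
  shows "cnt (pv n a b) x y = (if x = a \<and> y = b then 2 else if x = b \<and> y = a then 0 else 1)"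
proof -
  define R where "R = filter (\<lambda>c. c \<noteq> a \<and> c \<noteq> b) [0..<n]"
  have dR: "distinct R" and sR: "set R = {0..<n} - {a,b}" unfolding R_def by auto
  have c: "cnt (pv n a b) x y = (if prefers (a#b#R) x y then 1 else 0) + (if prefers (rev R @ [a,b]) x y then 1 else 0)"
    unfolding pv_def R_def[symmetric] Let_def cnt_def by auto
  show ?thesis
  proof (cases "x \<in> set R \<and> y \<in> set R")
    case True
    then have "prefers R x y \<noteq> prefers R y x" using prefers_total[OF dR, of x y] prefers_asym[OF dR, of x y] assms by auto
    then show ?thesis using True sR c by (auto simp: prefers_append prefers_rev)
  next
    case False
    then show ?thesis using sR c assms by (auto simp: prefers_append prefers_rev dest: prefers_set)
  qed
qed

lemma pv_marg: "a<n \<Longrightarrow> b<n \<Longrightarrow> a\<noteq>b \<Longrightarrow> x<n \<Longrightarrow> y<n \<Longrightarrow> x\<noteq>y \<Longrightarrow>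
  int (cnt (pv n a b) x y) - int (cnt (pv n a b) y x) = (if (a,b)=(x,y) then 2 else 0) - (if (a,b)=(y,x) then 2 else 0)"
  using pv_cnt[of a n b x y] pv_cnt[of a n b y x] by auto
lemma tour_arc: assumes "is_tournament n T" "T a b" shows "a < n \<and> b < n \<and> a \<noteq> b"
proof -
  have "\<forall>a b. T a b \<longrightarrow> a < n \<and> b < n \<and> a \<noteq> b" using assms(1) unfolding is_tournament_def by (rule conjunct1)
  from this[rule_format, OF assms(2)] show ?thesis .
qed
lemma tour_iff: assumes "is_tournament n T" "a < n" "b < n" "a \<noteq> b" shows "T a b \<longleftrightarrow> \<not> T b a"
proof -
  have "\<forall>a<n. \<forall>b<n. a \<noteq> b \<longrightarrow> (T a b \<longleftrightarrow> \<not> T b a)" using assms(1) unfolding is_tournament_def by (rule conjunct2)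
  from this[rule_format, OF assms(2) assms(3) assms(4)] show ?thesis .
qed

lemma gen_cnt: "generates n U T \<longleftrightarrow> is_voter_set n U \<and>
     (\<forall>a<n. \<forall>b<n. a \<noteq> b \<longrightarrow> (T a b \<longleftrightarrow> cnt U b a < cnt U a b))"
  unfolding generates_def cnt_def by simp

lemma exists_gen:
  assumes tour: "is_tournament n T"
  shows "\<exists>U. generates n U T"
proof -
  define A where "A = {(a,b). a < n \<and> b < n \<and> T a b}"
  have finA: "finite A" by (rule finite_subset[of _ "{0..<n} \<times> {0..<n}"]) (auto simp: A_def)
  show ?thesis
  proof (cases "A = {}")
    case True
    have "generates n {#[0..<n]#} T"
      unfolding gen_cnt is_voter_set_def is_voter_def
    proof (intro conjI allI impI)
      fix a b assume "a < n" "b < n" "a \<noteq> b"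
      then have "T a b \<or> T b a" using tour_iff[OF tour \<open>a < n\<close> \<open>b < n\<close> \<open>a \<noteq> b\<close>] by blast
      then have False using True \<open>a < n\<close> \<open>b < n\<close> unfolding A_def by auto
      then show "T a b \<longleftrightarrow> cnt {#[0..<n]#} b a < cnt {#[0..<n]#} a b" by simp
    qed auto
    then show ?thesis by blast
  next
    case False
    define U where "U = (\<Sum>p\<in>A. pv n (fst p) (snd p))"
    have Ane: "U \<noteq> {#}"
    proof
      assume "U = {#}"
      obtain p where p: "p \<in> A" using False by blast
      have "U = pv n (fst p) (snd p) + (\<Sum>q\<in>A - {p}. pv n (fst q) (snd q))"
        unfolding U_def using sum.remove[OF finA p] .
      then show False using \<open>U = {#}\<close> by (simp add: pv_def Let_def)
    qed
    have vs: "is_voter_set n U"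
      unfolding is_voter_set_def
    proof (intro conjI ballI Ane)
      fix xs assume "xs \<in># U"
      then have "xs \<in># (\<Sum>p\<in>A. pv n (fst p) (snd p))" unfolding U_def .
      from in_sum_mset[OF finA this] obtain p where pA: "p \<in> A" and xp: "xs \<in># pv n (fst p) (snd p)" ..
      obtain a b where pab: "p = (a,b)" by (cases p)
      have p: "a < n" "b < n" "T a b" using pA unfolding pab A_def by simp_all
      have "xs \<in># pv n a b" using xp unfolding pab by simp
      note p = p this
      have "a \<noteq> b" using tour_arc[OF tour p(3)] by simp
      then show "is_voter n xs" using pv_voters[OF p(1) p(2) _ p(4)] by simp
    qed
    have marg: "int (cnt U x y) - int (cnt U y x) = (if (x,y) \<in> A then 2 else 0) - (if (y,x) \<in> A then 2 else 0)"
      if xy: "x < n" "y < n" "x \<noteq> y" for x y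
    proof -
      have "int (cnt U x y) - int (cnt U y x) = (\<Sum>p\<in>A. int (cnt (pv n (fst p) (snd p)) x y) - int (cnt (pv n (fst p) (snd p)) y x))"
        unfolding U_def cnt_sum[OF finA] of_nat_sum sum_subtractf ..
      also have "\<dots> = (\<Sum>p\<in>A. (if p = (x,y) then 2 else 0) - (if p = (y,x) then 2 else 0))"
      proof (rule sum.cong[OF refl])
        fix p assume "p \<in> A"
        then obtain a b where p: "p = (a,b)" "a < n" "b < n" "T a b" unfolding A_def by auto
        then have "a \<noteq> b" using tour_arc[OF tour] by blast
        show "int (cnt (pv n (fst p) (snd p)) x y) - int (cnt (pv n (fst p) (snd p)) y x) =
            (if p = (x,y) then 2 else 0) - (if p = (y,x) then 2 else 0)"
          unfolding p(1) fst_conv snd_conv by (rule pv_marg[OF p(2) p(3) \<open>a \<noteq> b\<close> xy])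
      qed
      also have "\<dots> = (if (x,y) \<in> A then 2 else 0) - (if (y,x) \<in> A then 2 else 0)"
        unfolding sum_subtractf using finA by (simp add: sum.delta')
      finally show ?thesis .
    qed
    have "generates n U T"
      unfolding gen_cnt
    proof (intro conjI vs allI impI)
      fix a b assume ab: "a < n" "b < n" "a \<noteq> b"
      have "T a b \<longleftrightarrow> \<not> T b a" using tour_iff[OF tour ab] .
      moreover have "(a,b) \<in> A \<longleftrightarrow> T a b" "(b,a) \<in> A \<longleftrightarrow> T b a" using ab unfolding A_def by auto
      ultimately show "T a b \<longleftrightarrow> cnt U b a < cnt U a b" using marg[OF ab] by (cases "T a b") auto
    qed
    then show ?thesis by blast
  qed
qed

lemma par_gap: "even ((x::nat) + y) \<Longrightarrow> x \<noteq> y \<Longrightarrow> x + 1 < y \<or> y + 1 < x"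
  by (metis add_self_div_2 dvd_add_triv_left_iff even_Suc linorder_neqE_nat not_less_eq odd_add Suc_eq_plus1 less_SucE)

lemma reduce_even':
  assumes tour: "is_tournament n T" and g: "generates n U T" and ev: "even (size U)"
  shows "\<exists>U'. generates n U' T \<and> size U' = size U - 1"
proof -
  have vs: "is_voter_set n U" using g by (simp add: gen_cnt)
  then have "U \<noteq> {#}" by (simp add: is_voter_set_def)
  then obtain z where z: "z \<in># U" by blast
  define U' where "U' = U - {#z#}"
  have U: "U = add_mset z U'" using z unfolding U'_def by simp
  have sz: "size U' = size U - 1" using U by simp
  have "size U \<ge> 1" using U by simp
  moreover have "size U \<noteq> 1" using ev by auto
  ultimately have "size U \<ge> 2" by linarith
  then have "U' \<noteq> {#}" using sz by auto
  moreover have "\<forall>xs\<in>#U'. is_voter n xs" using vs U by (auto simp: is_voter_set_def)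
  ultimately have vs': "is_voter_set n U'" by (simp add: is_voter_set_def)
  have zv: "is_voter n z" using vs z by (simp add: is_voter_set_def)
  have "generates n U' T"
    unfolding gen_cnt
  proof (intro conjI vs' allI impI)
    fix a b assume ab: "a < n" "b < n" "a \<noteq> b"
    have tot: "cnt U a b + cnt U b a = size U" using cnt_total[OF vs ab] .
    have iff: "T a b \<longleftrightarrow> \<not> T b a" using tour_iff[OF tour ab] .
    have ga: "T a b \<longleftrightarrow> cnt U b a < cnt U a b" "T b a \<longleftrightarrow> cnt U a b < cnt U b a"
      using g ab unfolding gen_cnt by auto
    have ne: "cnt U a b \<noteq> cnt U b a" using iff ga by auto
    have "distinct z" "set z = {0..<n}" using zv by (auto simp: is_voter_def)
    then have pz: "prefers z a b \<noteq> prefers z b a" using prefers_total[of z a b] prefers_asym[of z a b] ab by auto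
    have c1: "cnt U a b = cnt U' a b + (if prefers z a b then 1 else 0)"
      and c2: "cnt U b a = cnt U' b a + (if prefers z b a then 1 else 0)"
      unfolding U cnt_def by auto
    show "T a b \<longleftrightarrow> cnt U' b a < cnt U' a b"
    proof -
      have "even (cnt U a b + cnt U b a)" using tot ev by simp
      then have gap: "cnt U a b + 1 < cnt U b a \<or> cnt U b a + 1 < cnt U a b" using ne by (rule par_gap)
      show ?thesis
      proof (cases "prefers z a b")
        case True
        then have "\<not> prefers z b a" using pz by simp
        then show ?thesis using True ga(1) gap c1 c2 by auto
      next
        case False
        then have "prefers z b a" using pz by simp
        then show ?thesis using False ga(1) gap c1 c2 by auto
      qed
    qed
  qed
  then show ?thesis using sz by blast
qed

lemma vT_odd:
  assumes tour: "is_tournament n T"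
  shows "odd (v_T n T)"
proof -
  let ?P = "\<lambda>k. \<exists>U. generates n U T \<and> size U = k"
  obtain U where "generates n U T" using exists_gen[OF tour] by blast
  then have ex: "?P (size U)" by blast
  have P: "?P (v_T n T)" unfolding v_T_def by (rule LeastI_ex) (use ex in blast)
  then obtain U0 where g0: "generates n U0 T" "size U0 = v_T n T" by blast
  show ?thesis
  proof
    assume "even (v_T n T)"
    then obtain U' where g': "generates n U' T" "size U' = size U0 - 1"
      using reduce_even'[OF tour g0(1)] g0(2) by auto
    have "U0 \<noteq> {#}" using g0 by (simp add: gen_cnt is_voter_set_def)
    then have "size U' < v_T n T" using g' g0 by (simp add: nonempty_has_size)
    moreover have "v_T n T \<le> size U'" unfolding v_T_def by (rule Least_le) (use g' in blast)
    ultimately show False by simp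
  qed
qed

theorem lemma1:
  fixes n :: nat
  assumes "n \<ge> 1"
  shows "odd (v n)"
proof -
  let ?S = "{v_T n T | T. is_tournament n T}"
  have sub: "{T. is_tournament n T} \<subseteq> (\<lambda>S a b. (a,b) \<in> S) ` Pow ({0..<n} \<times> {0..<n})"
  proof
    fix T assume "T \<in> {T. is_tournament n T}"
    then have "{(a,b). T a b} \<in> Pow ({0..<n} \<times> {0..<n})" using tour_arc[of n T] by auto
    moreover have "T = (\<lambda>a b. (a,b) \<in> {(a,b). T a b})" by simp
    ultimately show "T \<in> (\<lambda>S a b. (a,b) \<in> S) ` Pow ({0..<n} \<times> {0..<n})" by blast
  qed
  have fin: "finite {T. is_tournament n T}" by (rule finite_subset[OF sub]) simp
  have "?S = v_T n ` {T. is_tournament n T}" by auto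
  then have finS: "finite ?S" using fin by simp
  have "is_tournament n (\<lambda>a b. a < b \<and> b < n)" unfolding is_tournament_def by auto
  then have neS: "?S \<noteq> {}" by blast
  have "v n \<in> ?S" unfolding v_def by (rule Max_in[OF finS neS])
  then show ?thesis using vT_odd by auto
qed

end
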